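(* Let $n_1,m_1\ge1$, $M\ge n_1+m_1$ and $c_1\ge0$ be integers. Let $T$ be the rooted tree consisting of a path of $M-m_1-n_1$ edges from the root down to a vertex $A$, followed below $A$ by two branches: a left path of $n_1$ edges ending at a leaf of capacity $c_1$, and a right path of $m_1$ edges ending at a leaf of capacity $c_2=c_1+n_1$. Let $T'$ be a path of $M$ edges from the root ending at a leaf of capacity $c_1$. Then $$G(T)=\genfrac{[}{]}{0pt}{}{n_1+m_1}{n_1}\,G(T').$$
   Context: $[n]=\sum_{i=0}^{n-1}q^i$, $[n]!=\prod_{i=1}^n[i]$, $\genfrac{[}{]}{0pt}{}{n}{k}=[n]!/([k]![n-k]!)$. For a rooted tree whose leaves carry non-negative integer capacities, a labelling of Lascoux--Sch\"utzenberger type is an assignment of non-negative integers to edges such that labels are weakly increasing along every path going away from the root, and the label of the edge incident to each leaf is at most that leaf's capacity. $G(T)=\sum q^{\text{(sum of labels)}}$ over all such labellings. *)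

theory Defs
  imports "HOL-Computational_Algebra.Polynomial"
begin

definition qint :: "nat \<Rightarrow> int poly" where
  "qint n = (\<Sum>i<n. monom 1 i)"

definition qfact :: "nat \<Rightarrow> int poly" where
  "qfact n = (\<Prod>i=1..n. qint i)"

definition qbinom :: "nat \<Rightarrow> nat \<Rightarrow> int poly" where
  "qbinom n k = qfact n div (qfact k * qfact (n - k))"

text \<open>Rooted trees: a vertex is either a leaf carrying a capacity, or an internal
  vertex with a list of children. Each non-root vertex is identified with the edge
  joining it to its parent.\<close>
datatype tree = Leaf nat | Node "tree list"

fun subtree_at :: "tree \<Rightarrow> nat list \<Rightarrow> tree option" where
  "subtree_at t [] = Some t"
| "subtree_at (Leaf c) (i # p) = None"
| "subtree_at (Node ts) (i # p) = (if i < length ts then subtree_at (ts ! i) p else None)"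

definition edges :: "tree \<Rightarrow> nat list set" where
  "edges t = {p. p \<noteq> [] \<and> subtree_at t p \<noteq> None}"

definition LS_labellings :: "tree \<Rightarrow> (nat list \<Rightarrow> nat) set" where
  "LS_labellings t = {f.
      (\<forall>p. p \<notin> edges t \<longrightarrow> f p = 0)
    \<and> (\<forall>p\<in>edges t. \<forall>i. p @ [i] \<in> edges t \<longrightarrow> f p \<le> f (p @ [i]))
    \<and> (\<forall>p\<in>edges t. \<forall>c. subtree_at t p = Some (Leaf c) \<longrightarrow> f p \<le> c)}"

definition G :: "tree \<Rightarrow> int poly" where
  "G t = (\<Sum>f\<in>LS_labellings t. monom 1 (\<Sum>p\<in>edges t. f p))"

fun chain :: "nat \<Rightarrow> tree \<Rightarrow> tree" where
  "chain 0 t = t"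
| "chain (Suc k) t = Node [chain k t]"

end

theory Submission
  imports Defs
begin


fun qb :: "nat \<Rightarrow> nat \<Rightarrow> int poly" where
  "qb 0 0 = 1"
| "qb 0 (Suc k) = 0"
| "qb (Suc N) 0 = 1"
| "qb (Suc N) (Suc k) = qb N k + monom 1 (Suc k) * qb N (Suc k)"

lemma qb_gt: "N < k \<Longrightarrow> qb N k = 0"
proof (induction N arbitrary: k)
  case 0 then show ?case by (cases k) auto
next
  case (Suc N) then show ?case by (cases k) auto
qed

lemma qb_diag: "qb N N = 1"
  by (induction N) (auto simp: qb_gt)

lemma qint_Suc_split: "qint (Suc k) + monom 1 (Suc k) * qint j = qint (Suc k + j)"
proof -
  have "monom 1 (Suc k) * qint j = (\<Sum>i<j. monom 1 (Suc k + i))"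
    by (simp add: qint_def sum_distrib_left mult_monom)
  also have "\<dots> = (\<Sum>i\<in>{Suc k..<Suc k + j}. monom (1::int) i)"
    by (rule sum.reindex_bij_witness[of _ "\<lambda>i. i - Suc k" "\<lambda>i. Suc k + i"]) auto
  finally show ?thesis
    unfolding qint_def
    by (metis atLeast0LessThan le_add1 sum.atLeastLessThan_concat zero_le)
qed

lemma qfact_0 [simp]: "qfact 0 = 1"
  by (simp add: qfact_def)

lemma qfact_Suc: "qfact (Suc n) = qfact n * qint (Suc n)"
  by (simp add: qfact_def)

lemma qint_nz: "qint (Suc n) \<noteq> 0"
proof -
  have "coeff (qint (Suc n)) 0 = 1"
    by (simp add: qint_def coeff_sum coeff_monom)
  then show ?thesis by auto
qed

lemma qfact_nz: "qfact n \<noteq> 0"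
  by (induction n) (auto simp: qfact_Suc qint_nz)

lemma qb_fact: "k \<le> N \<Longrightarrow> qb N k * qfact k * qfact (N - k) = qfact N"
proof (induction N arbitrary: k)
  case 0 then show ?case by simp
next
  case (Suc N)
  show ?case
  proof (cases k)
    case 0 then show ?thesis by simp
  next
    case (Suc j)
    show ?thesis
    proof (cases "j = N")
      case True then show ?thesis using Suc by (simp add: qb_diag)
    next
      case False
      with Suc \<open>k \<le> Suc N\<close> have jN: "Suc j \<le> N" by simp
      have e1: "qb N j * qfact j * qfact (N - j) = qfact N" using Suc.IH jN by simp
      have e2: "qb N (Suc j) * qfact (Suc j) * qfact (N - Suc j) = qfact N" using Suc.IH jN by simp
      have nj: "N - j = Suc (N - Suc j)" using jN by simp
      have "qb (Suc N) k * qfact k * qfact (Suc N - k)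
         = (qb N j + monom 1 (Suc j) * qb N (Suc j)) * qfact (Suc j) * qfact (N - j)"
        using Suc by simp
      also have "\<dots> = qb N j * qfact j * qfact (N - j) * qint (Suc j)
           + monom 1 (Suc j) * (qb N (Suc j) * qfact (Suc j) * qfact (N - Suc j)) * qint (N - j)"
        unfolding nj qfact_Suc by (simp add: algebra_simps)
      also have "\<dots> = qfact N * (qint (Suc j) + monom 1 (Suc j) * qint (N - j))"
        using e1 e2 by (simp add: algebra_simps)
      also have "\<dots> = qfact (Suc N)"
        using jN by (simp add: qint_Suc_split qfact_Suc)
      finally show ?thesis .
    qed
  qed
qed

lemma qbinom_qb: "k \<le> N \<Longrightarrow> qbinom N k = qb N k"
proof -
  assume "k \<le> N"
  then have "qfact N = qb N k * (qfact k * qfact (N - k))" using qb_fact by (simp add: mult.assoc)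
  then show ?thesis unfolding qbinom_def using qfact_nz by simp
qed

lemma qb_prod: "qb (n + d) n * qb (n + m + d) m = qb (n + m) n * qb (n + m + d) (n + m)"
proof -
  have a: "qb (n + d) n * qfact n * qfact d = qfact (n + d)" using qb_fact[of n "n+d"] by simp
  have b: "qb (n + m + d) m * qfact m * qfact (n + d) = qfact (n + m + d)" using qb_fact[of m "n+m+d"] by (simp add: add.commute add.left_commute)
  have c: "qb (n + m) n * qfact n * qfact m = qfact (n + m)" using qb_fact[of n "n+m"] by simp
  have d: "qb (n + m + d) (n + m) * qfact (n + m) * qfact d = qfact (n + m + d)" using qb_fact[of "n+m" "n+m+d"] by simp
  have "(qb (n + d) n * qb (n + m + d) m) * (qfact n * qfact m * qfact d)
      = (qb (n + m) n * qb (n + m + d) (n + m)) * (qfact n * qfact m * qfact d)"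
  proof -
    have "(qb (n + d) n * qb (n + m + d) m) * (qfact n * qfact m * qfact d)
        = qb (n + m + d) m * qfact m * (qb (n + d) n * qfact n * qfact d)" by (simp add: algebra_simps)
    also have "\<dots> = qfact (n + m + d)" using a b by simp
    also have "\<dots> = qb (n + m + d) (n + m) * (qb (n + m) n * qfact n * qfact m) * qfact d" using c d by simp
    finally show ?thesis by (simp add: algebra_simps)
  qed
  then show ?thesis using qfact_nz by simp
qed




lemma Nil_notin_edges [simp]: "[] \<notin> edges t"
  by (simp add: edges_def)

lemma Cons_edges_Leaf [simp]: "i # p \<notin> edges (Leaf c)"
  by (simp add: edges_def)

lemma Cons_edges_Node [simp]:
  "(i # p \<in> edges (Node ts)) \<longleftrightarrow> i < length ts \<and> (p = [] \<or> p \<in> edges (ts ! i))"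
  by (auto simp: edges_def)

lemma edges_Leaf [simp]: "edges (Leaf c) = {}"
  by (auto simp: edges_def neq_Nil_conv)

lemma edges_Node: "edges (Node ts) = (\<Union>i<length ts. insert [i] ((#) i ` edges (ts ! i)))"
  apply (rule set_eqI)
  subgoal for x by (cases x) auto
  done

lemma finite_edges [simp]: "finite (edges t)"
proof (induction t)
  case (Leaf x) then show ?case by simp
next
  case (Node ts) then show ?case by (simp add: edges_Node)
qed

fun leafok :: "tree \<Rightarrow> nat \<Rightarrow> bool" where
  "leafok (Leaf c) v = (v \<le> c)"
| "leafok (Node ts) v = True"

definition L :: "tree \<Rightarrow> nat \<Rightarrow> (nat list \<Rightarrow> nat) set" where
  "L t a = {f \<in> LS_labellings t. leafok t a \<and> (\<forall>i. [i] \<in> edges t \<longrightarrow> a \<le> f [i])}"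

definition wt :: "tree \<Rightarrow> (nat list \<Rightarrow> nat) \<Rightarrow> nat" where
  "wt t f = (\<Sum>p\<in>edges t. f p)"

definition GL :: "tree \<Rightarrow> nat \<Rightarrow> int poly" where
  "GL t a = (\<Sum>f\<in>L t a. monom 1 (wt t f))"

definition ext :: "nat \<Rightarrow> nat \<Rightarrow> (nat list \<Rightarrow> nat) \<Rightarrow> nat list \<Rightarrow> nat" where
  "ext i v g p = (case p of [] \<Rightarrow> 0 | j # p' \<Rightarrow> if j = i then (if p' = [] then v else g p') else 0)"

definition res :: "nat \<Rightarrow> (nat list \<Rightarrow> nat) \<Rightarrow> nat list \<Rightarrow> nat" where
  "res i f p = (if p = [] then 0 else f (i # p))"

lemma ext_simps [simp]: "ext i v g [] = 0" "ext i v g [j] = (if j = i then v else 0)"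
  "p \<noteq> [] \<Longrightarrow> ext i v g (j # p) = (if j = i then g p else 0)"
  by (auto simp: ext_def)

lemma res_simps [simp]: "res i f [] = 0" "p \<noteq> [] \<Longrightarrow> res i f p = f (i # p)"
  by (auto simp: res_def)

lemma LS_zero: "f \<in> LS_labellings t \<Longrightarrow> p \<notin> edges t \<Longrightarrow> f p = 0"
  by (auto simp: LS_labellings_def)

lemma LS_mono: "f \<in> LS_labellings t \<Longrightarrow> p \<in> edges t \<Longrightarrow> p @ [i] \<in> edges t \<Longrightarrow> f p \<le> f (p @ [i])"
  by (auto simp: LS_labellings_def)

lemma LS_leaf: "f \<in> LS_labellings t \<Longrightarrow> p \<in> edges t \<Longrightarrow> subtree_at t p = Some (Leaf c) \<Longrightarrow> f p \<le> c"
  by (auto simp: LS_labellings_def)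




lemma edges_Node1: "p \<in> edges (Node [s]) \<longleftrightarrow> (\<exists>p'. p = 0 # p' \<and> (p' = [] \<or> p' \<in> edges s))"
  by (cases p) auto

lemma edges_Node1E: assumes "p \<in> edges (Node [s])" obtains p' where "p = 0 # p'" "p' = [] \<or> p' \<in> edges s"
  using assms by (cases p) auto

lemma mem1:
  assumes g: "g \<in> L s v" and av: "a \<le> v"
  shows "ext 0 v g \<in> L (Node [s]) a"
proof -
  have gl: "g \<in> LS_labellings s" and lo: "leafok s v" and top: "\<And>i. [i] \<in> edges s \<Longrightarrow> v \<le> g [i]"
    using g by (auto simp: L_def)
  let ?f = "ext 0 v g"
  have z: "?f p = 0" if "p \<notin> edges (Node [s])" for p
  proof (cases p)
    case Nil then show ?thesis by simp
  next
    case (Cons j p')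
    then show ?thesis using that LS_zero[OF gl, of p'] by (cases "p' = []") auto
  qed
  have m: "?f p \<le> ?f (p @ [i])" if pe: "p \<in> edges (Node [s])" and pe2: "p @ [i] \<in> edges (Node [s])" for p i
  proof -
    obtain p' where p: "p = 0 # p'" "p' = [] \<or> p' \<in> edges s" using pe by (rule edges_Node1E)
    show ?thesis
    proof (cases "p' = []")
      case True
      then have "[i] \<in> edges s" using pe2 p by simp
      then show ?thesis using top p True by simp
    next
      case False
      then show ?thesis using pe pe2 p LS_mono[OF gl, of p' i] by simp
    qed
  qed
  have l: "?f p \<le> c" if pe: "p \<in> edges (Node [s])" and pe2: "subtree_at (Node [s]) p = Some (Leaf c)" for p c
  proof -
    obtain p' where p: "p = 0 # p'" "p' = [] \<or> p' \<in> edges s" using pe by (rule edges_Node1E)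
    show ?thesis
    proof (cases "p' = []")
      case True
      then have "s = Leaf c" using pe2 p by simp
      then show ?thesis using lo p True by simp
    next
      case False
      then show ?thesis using pe pe2 p LS_leaf[OF gl, of p' c] by simp
    qed
  qed
  show ?thesis using z m l av unfolding L_def LS_labellings_def by auto
qed

lemma mem2:
  assumes f: "f \<in> L (Node [s]) a"
  shows "res 0 f \<in> L s (f [0])" "a \<le> f [0]"
proof -
  have fl: "f \<in> LS_labellings (Node [s])" and top: "\<And>i. [i] \<in> edges (Node [s]) \<Longrightarrow> a \<le> f [i]"
    using f by (auto simp: L_def)
  show "a \<le> f [0]" using top[of 0] by simp
  let ?g = "res 0 f"
  have z: "?g p = 0" if "p \<notin> edges s" for p
    using that LS_zero[OF fl, of "0 # p"] by (cases "p = []") auto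
  have m: "?g p \<le> ?g (p @ [i])" if "p \<in> edges s" "p @ [i] \<in> edges s" for p i
    using that LS_mono[OF fl, of "0 # p" i] by (cases "p = []") auto
  have l: "?g p \<le> c" if "p \<in> edges s" "subtree_at s p = Some (Leaf c)" for p c
    using that LS_leaf[OF fl, of "0 # p" c] by (cases "p = []") auto
  have lo: "leafok s (f [0])"
  proof (cases s)
    case (Leaf c)
    then show ?thesis using LS_leaf[OF fl, of "[0]" c] by simp
  qed simp
  have t: "f [0] \<le> ?g [i]" if "[i] \<in> edges s" for i
    using that LS_mono[OF fl, of "[0]" i] by simp
  show "?g \<in> L s (f [0])" using z m l lo t unfolding L_def LS_labellings_def by auto
qed

lemma inv1:
  assumes f: "f \<in> L (Node [s]) a"
  shows "ext 0 (f [0]) (res 0 f) = f"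
proof
  fix p
  have fl: "f \<in> LS_labellings (Node [s])" using f by (auto simp: L_def)
  show "ext 0 (f [0]) (res 0 f) p = f p"
  proof (cases p)
    case Nil then show ?thesis using LS_zero[OF fl, of "[]"] by simp
  next
    case (Cons j p')
    then show ?thesis using LS_zero[OF fl, of p] by (cases "p' = []") auto
  qed
qed

lemma inv2:
  assumes g: "g \<in> L s v"
  shows "res 0 (ext 0 v g) = g"
proof
  fix p
  have gl: "g \<in> LS_labellings s" using g by (auto simp: L_def)
  show "res 0 (ext 0 v g) p = g p"
    using LS_zero[OF gl, of "[]"] by (cases "p = []") auto
qed

lemma wt_ext_sum: "(\<Sum>p\<in>insert [i] ((#) i ` E). ext i v g p) = v + (\<Sum>p\<in>E. g p)"
  if "finite E" "[] \<notin> E"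
proof -
  have "[i] \<notin> (#) i ` E" using that by auto
  then have "(\<Sum>p\<in>insert [i] ((#) i ` E). ext i v g p) = v + (\<Sum>p\<in>(#) i ` E. ext i v g p)"
    using that by simp
  also have "(\<Sum>p\<in>(#) i ` E. ext i v g p) = (\<Sum>p\<in>E. ext i v g (i # p))"
    using sum.reindex[of "(#) i" E "ext i v g"] by (simp add: inj_on_def comp_def)
  also have "\<dots> = (\<Sum>p\<in>E. g p)"
  proof (rule sum.cong)
    fix x assume "x \<in> E"
    then have "x \<noteq> []" using that by auto
    then show "ext i v g (i # x) = g x" by simp
  qed simp
  finally show ?thesis .
qed

lemma edges_Node1set: "edges (Node [s]) = insert [0] ((#) 0 ` edges s)"
  using edges_Node1 by blast

lemma wt1: "wt (Node [s]) (ext 0 v g) = v + wt s g"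
  unfolding wt_def edges_Node1set using wt_ext_sum[of "edges s" 0 v g] by simp

lemma single:
  assumes fin: "\<And>v. finite (L s v)" and van: "\<And>v. B < v \<Longrightarrow> L s v = {}"
  shows "GL (Node [s]) a = (\<Sum>v\<in>{a..B}. monom 1 v * GL s v)"
    and "finite (L (Node [s]) a)"
    and "B < a \<Longrightarrow> L (Node [s]) a = {}"
proof -
  let ?S = "Sigma {a..B} (L s)"
  have le: "f [0] \<le> B" if "f \<in> L (Node [s]) a" for f
    using mem2[OF that] van by (metis empty_iff not_le)
  have sub: "L (Node [s]) a \<subseteq> (\<lambda>(v, g). ext 0 v g) ` ?S"
  proof
    fix f assume f: "f \<in> L (Node [s]) a"
    then have "(f [0], res 0 f) \<in> ?S" using mem2[OF f] le[OF f] by auto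
    moreover have "f = (\<lambda>(v, g). ext 0 v g) (f [0], res 0 f)" using inv1[OF f] by simp
    ultimately show "f \<in> (\<lambda>(v, g). ext 0 v g) ` ?S" by blast
  qed
  have finS: "finite ?S" using fin by auto
  show "finite (L (Node [s]) a)" using finite_subset[OF sub] finS by blast
  show "B < a \<Longrightarrow> L (Node [s]) a = {}" using le mem2 by fastforce
  have "GL (Node [s]) a = (\<Sum>(v, g)\<in>?S. monom 1 (v + wt s g))"
    unfolding GL_def
  proof (rule sum.reindex_bij_witness[where i = "\<lambda>(v, g). ext 0 v g" and j = "\<lambda>f. (f [0], res 0 f)"])
    fix f assume f: "f \<in> L (Node [s]) a"
    show "(\<lambda>(v, g). ext 0 v g) (f [0], res 0 f) = f" using inv1[OF f] by simp
  next
    fix f assume f: "f \<in> L (Node [s]) a"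
    show "(f [0], res 0 f) \<in> ?S" using mem2[OF f] le[OF f] by auto
  next
    fix x assume x: "x \<in> ?S"
    obtain v g where [simp]: "x = (v, g)" by (cases x)
    show "(\<lambda>f. (f [0], res 0 f)) ((\<lambda>(v, g). ext 0 v g) x) = x" using inv2 x by auto
  next
    fix x assume x: "x \<in> ?S"
    obtain v g where [simp]: "x = (v, g)" by (cases x)
    show "(\<lambda>(v, g). ext 0 v g) x \<in> L (Node [s]) a" using mem1 x by auto
  next
    fix f assume f: "f \<in> L (Node [s]) a"
    have "wt (Node [s]) f = wt (Node [s]) (ext 0 (f [0]) (res 0 f))" using inv1[OF f] by simp
    also have "\<dots> = f [0] + wt s (res 0 f)" by (rule wt1)
    finally show "(case (f [0], res 0 f) of (v, g) \<Rightarrow> monom 1 (v + wt s g)) = monom 1 (wt (Node [s]) f)" by simp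
  qed
  also have "\<dots> = (\<Sum>v\<in>{a..B}. \<Sum>g\<in>L s v. monom 1 v * monom 1 (wt s g))"
    by (subst sum.Sigma) (use fin in \<open>auto simp: mult_monom\<close>)
  also have "\<dots> = (\<Sum>v\<in>{a..B}. monom 1 v * GL s v)"
    by (simp add: GL_def sum_distrib_left)
  finally show "GL (Node [s]) a = (\<Sum>v\<in>{a..B}. monom 1 v * GL s v)" .
qed




lemma edges_Node2E:
  assumes "p \<in> edges (Node [s1, s2])"
  obtains (A) p' where "p = 0 # p'" "p' = [] \<or> p' \<in> edges s1"
        | (B) p' where "p = 1 # p'" "p' = [] \<or> p' \<in> edges s2"
proof (cases p)
  case Nil then show ?thesis using assms by simp
next
  case (Cons j p')
  then have "j < 2" "p' = [] \<or> p' \<in> edges ([s1, s2] ! j)" using assms by auto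
  then show ?thesis using Cons A B by (cases j) auto
qed

lemma edges_Node2set: "edges (Node [s1, s2]) = insert [0] ((#) 0 ` edges s1) \<union> insert [1] ((#) 1 ` edges s2)"
proof (rule set_eqI)
  fix p show "p \<in> edges (Node [s1, s2]) \<longleftrightarrow> p \<in> insert [0] ((#) 0 ` edges s1) \<union> insert [1] ((#) 1 ` edges s2)"
  proof
    assume "p \<in> edges (Node [s1, s2])"
    then show "p \<in> insert [0] ((#) 0 ` edges s1) \<union> insert [1] ((#) 1 ` edges s2)"
      by (cases rule: edges_Node2E) auto
  qed auto
qed

lemma ext_other [simp]: "j \<noteq> i \<Longrightarrow> ext i v g (j # p) = 0"
  by (simp add: ext_def)

definition ext2 where "ext2 v1 g1 v2 g2 p = ext 0 v1 g1 p + ext 1 v2 g2 p"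

lemma mem_fork:
  assumes g1: "g1 \<in> L s1 v1" and g2: "g2 \<in> L s2 v2" and a1: "a \<le> v1" and a2: "a \<le> v2"
  shows "ext2 v1 g1 v2 g2 \<in> L (Node [s1, s2]) a"
proof -
  have gl1: "g1 \<in> LS_labellings s1" and lo1: "leafok s1 v1" and top1: "\<And>i. [i] \<in> edges s1 \<Longrightarrow> v1 \<le> g1 [i]"
    using g1 by (auto simp: L_def)
  have gl2: "g2 \<in> LS_labellings s2" and lo2: "leafok s2 v2" and top2: "\<And>i. [i] \<in> edges s2 \<Longrightarrow> v2 \<le> g2 [i]"
    using g2 by (auto simp: L_def)
  let ?f = "ext2 v1 g1 v2 g2"
  have z: "?f p = 0" if pe: "p \<notin> edges (Node [s1, s2])" for p
  proof (cases p)
    case Nil then show ?thesis by (simp add: ext2_def)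
  next
    case (Cons j p')
    then show ?thesis using pe LS_zero[OF gl1, of p'] LS_zero[OF gl2, of p']
      by (cases "p' = []") (auto simp: ext2_def less_2_cases_iff)
  qed
  have m: "?f p \<le> ?f (p @ [i])" if pe: "p \<in> edges (Node [s1, s2])" and pe2: "p @ [i] \<in> edges (Node [s1, s2])" for p i
    using pe
  proof (cases rule: edges_Node2E)
    case (A p')
    show ?thesis
    proof (cases "p' = []")
      case True
      then have "[i] \<in> edges s1" using pe2 A by simp
      then show ?thesis using top1 A True by (simp add: ext2_def)
    next
      case False
      then show ?thesis using pe pe2 A LS_mono[OF gl1, of p' i] by (simp add: ext2_def)
    qed
  next
    case (B p')
    show ?thesis
    proof (cases "p' = []")
      case True
      then have "[i] \<in> edges s2" using pe2 B by simp
      then show ?thesis using top2 B True by (simp add: ext2_def)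
    next
      case False
      then show ?thesis using pe pe2 B LS_mono[OF gl2, of p' i] by (simp add: ext2_def)
    qed
  qed
  have l: "?f p \<le> c" if pe: "p \<in> edges (Node [s1, s2])" and pe2: "subtree_at (Node [s1, s2]) p = Some (Leaf c)" for p c
    using pe
  proof (cases rule: edges_Node2E)
    case (A p')
    show ?thesis
    proof (cases "p' = []")
      case True
      then have "s1 = Leaf c" using pe2 A by simp
      then show ?thesis using lo1 A True by (simp add: ext2_def)
    next
      case False
      then show ?thesis using pe pe2 A LS_leaf[OF gl1, of p' c] by (simp add: ext2_def)
    qed
  next
    case (B p')
    show ?thesis
    proof (cases "p' = []")
      case True
      then have "s2 = Leaf c" using pe2 B by simp
      then show ?thesis using lo2 B True by (simp add: ext2_def)
    next
      case False
      then show ?thesis using pe pe2 B LS_leaf[OF gl2, of p' c] by (simp add: ext2_def)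
    qed
  qed
  have t: "a \<le> ?f [i]" if "[i] \<in> edges (Node [s1, s2])" for i
    using that a1 a2 by (auto simp: ext2_def less_2_cases_iff)
  show ?thesis using z m l t unfolding L_def LS_labellings_def by auto
qed

lemma mem_fork2:
  assumes f: "f \<in> L (Node [s1, s2]) a"
  shows "res 0 f \<in> L s1 (f [0])" "a \<le> f [0]" "res 1 f \<in> L s2 (f [1])" "a \<le> f [1]"
proof -
  have fl: "f \<in> LS_labellings (Node [s1, s2])" and top: "\<And>i. [i] \<in> edges (Node [s1, s2]) \<Longrightarrow> a \<le> f [i]"
    using f by (auto simp: L_def)
  show "a \<le> f [0]" using top[of 0] by simp
  show "a \<le> f [1]" using top[of 1] by simp
  let ?g = "res 0 f"
  have z: "?g p = 0" if "p \<notin> edges s1" for p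
    using that LS_zero[OF fl, of "0 # p"] by (cases "p = []") auto
  have m: "?g p \<le> ?g (p @ [i])" if "p \<in> edges s1" "p @ [i] \<in> edges s1" for p i
    using that LS_mono[OF fl, of "0 # p" i] by (cases "p = []") auto
  have l: "?g p \<le> c" if "p \<in> edges s1" "subtree_at s1 p = Some (Leaf c)" for p c
    using that LS_leaf[OF fl, of "0 # p" c] by (cases "p = []") auto
  have lo: "leafok s1 (f [0])"
  proof (cases s1)
    case (Leaf c)
    then show ?thesis using LS_leaf[OF fl, of "[0]" c] by simp
  qed simp
  have t: "f [0] \<le> ?g [i]" if "[i] \<in> edges s1" for i
    using that LS_mono[OF fl, of "[0]" i] by simp
  show "?g \<in> L s1 (f [0])" using z m l lo t unfolding L_def LS_labellings_def by auto
  let ?h = "res 1 f"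
  have z: "?h p = 0" if "p \<notin> edges s2" for p
    using that LS_zero[OF fl, of "1 # p"] by (cases "p = []") auto
  have m: "?h p \<le> ?h (p @ [i])" if "p \<in> edges s2" "p @ [i] \<in> edges s2" for p i
    using that LS_mono[OF fl, of "1 # p" i] by (cases "p = []") auto
  have l: "?h p \<le> c" if "p \<in> edges s2" "subtree_at s2 p = Some (Leaf c)" for p c
    using that LS_leaf[OF fl, of "1 # p" c] by (cases "p = []") auto
  have lo: "leafok s2 (f [1])"
  proof (cases s2)
    case (Leaf c)
    then show ?thesis using LS_leaf[OF fl, of "[1]" c] by simp
  qed simp
  have t: "f [1] \<le> ?h [i]" if "[i] \<in> edges s2" for i
    using that LS_mono[OF fl, of "[1]" i] by simp
  show "?h \<in> L s2 (f [1])" using z m l lo t unfolding L_def LS_labellings_def by auto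
qed

lemma inv_fork1:
  assumes f: "f \<in> L (Node [s1, s2]) a"
  shows "ext2 (f [0]) (res 0 f) (f [1]) (res 1 f) = f"
proof
  fix p
  have fl: "f \<in> LS_labellings (Node [s1, s2])" using f by (auto simp: L_def)
  show "ext2 (f [0]) (res 0 f) (f [1]) (res 1 f) p = f p"
  proof (cases p)
    case Nil then show ?thesis using LS_zero[OF fl, of "[]"] by (simp add: ext2_def)
  next
    case (Cons j p')
    then show ?thesis using LS_zero[OF fl, of p] by (cases "p' = []") (auto simp: ext2_def less_2_cases_iff)
  qed
qed

lemma inv_fork2:
  assumes g1: "g1 \<in> L s1 v1" and g2: "g2 \<in> L s2 v2"
  shows "res 0 (ext2 v1 g1 v2 g2) = g1" "res 1 (ext2 v1 g1 v2 g2) = g2" 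
    "ext2 v1 g1 v2 g2 [0] = v1" "ext2 v1 g1 v2 g2 [1] = v2"
proof -
  have gl1: "g1 \<in> LS_labellings s1" using g1 by (auto simp: L_def)
  have gl2: "g2 \<in> LS_labellings s2" using g2 by (auto simp: L_def)
  show "res 0 (ext2 v1 g1 v2 g2) = g1"
  proof
    fix p show "res 0 (ext2 v1 g1 v2 g2) p = g1 p"
      using LS_zero[OF gl1, of "[]"] by (cases "p = []") (auto simp: ext2_def)
  qed
  show "res 1 (ext2 v1 g1 v2 g2) = g2"
  proof
    fix p show "res 1 (ext2 v1 g1 v2 g2) p = g2 p"
      using LS_zero[OF gl2, of "[]"] by (cases "p = []") (auto simp: ext2_def)
  qed
  show "ext2 v1 g1 v2 g2 [0] = v1" "ext2 v1 g1 v2 g2 [1] = v2" by (auto simp: ext2_def)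
qed

lemma wt_fork: "wt (Node [s1, s2]) (ext2 v1 g1 v2 g2) = (v1 + wt s1 g1) + (v2 + wt s2 g2)"
proof -
  have d: "insert [0] ((#) 0 ` edges s1) \<inter> insert [1] ((#) 1 ` edges s2) = {}" by auto
  have "wt (Node [s1, s2]) (ext2 v1 g1 v2 g2)
      = (\<Sum>p\<in>insert [0] ((#) 0 ` edges s1). ext2 v1 g1 v2 g2 p) + (\<Sum>p\<in>insert [1] ((#) 1 ` edges s2). ext2 v1 g1 v2 g2 p)"
    unfolding wt_def edges_Node2set by (rule sum.union_disjoint) (use d in auto)
  also have "(\<Sum>p\<in>insert [0] ((#) 0 ` edges s1). ext2 v1 g1 v2 g2 p) = (\<Sum>p\<in>insert [0] ((#) 0 ` edges s1). ext 0 v1 g1 p)"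
    by (rule sum.cong) (auto simp: ext2_def)
  also have "(\<Sum>p\<in>insert [1] ((#) 1 ` edges s2). ext2 v1 g1 v2 g2 p) = (\<Sum>p\<in>insert [1] ((#) 1 ` edges s2). ext 1 v2 g2 p)"
    by (rule sum.cong) (auto simp: ext2_def)
  finally show ?thesis using wt_ext_sum[of "edges s1" 0 v1 g1] wt_ext_sum[of "edges s2" 1 v2 g2]
    by (simp add: wt_def)
qed




lemma sigma_sum:
  assumes fin: "\<And>v. finite (L s v)"
  shows "(\<Sum>(v, g)\<in>Sigma {a..B} (L s). monom 1 (v + wt s g)) = (\<Sum>v\<in>{a..B}. monom (1::int) v * GL s v)"
proof -
  have "(\<Sum>(v, g)\<in>Sigma {a..B} (L s). monom 1 (v + wt s g)) = (\<Sum>v\<in>{a..B}. \<Sum>g\<in>L s v. monom (1::int) v * monom 1 (wt s g))"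
    by (subst sum.Sigma) (use fin in \<open>auto simp: mult_monom\<close>)
  also have "\<dots> = (\<Sum>v\<in>{a..B}. monom 1 v * GL s v)"
    by (simp add: GL_def sum_distrib_left)
  finally show ?thesis .
qed

lemma fork:
  assumes fin1: "\<And>v. finite (L s1 v)" and van1: "\<And>v. B < v \<Longrightarrow> L s1 v = {}"
    and fin2: "\<And>v. finite (L s2 v)" and van2: "\<And>v. B < v \<Longrightarrow> L s2 v = {}"
  shows "GL (Node [s1, s2]) a = (\<Sum>v\<in>{a..B}. monom 1 v * GL s1 v) * (\<Sum>v\<in>{a..B}. monom 1 v * GL s2 v)"
    and "finite (L (Node [s1, s2]) a)"
    and "B < a \<Longrightarrow> L (Node [s1, s2]) a = {}"
proof -
  let ?S1 = "Sigma {a..B} (L s1)" and ?S2 = "Sigma {a..B} (L s2)"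
  let ?i = "\<lambda>((v1, g1), (v2, g2)). ext2 v1 g1 v2 g2"
  let ?j = "\<lambda>f. ((f [0], res 0 f), (f [1], res 1 f))"
  have le1: "f [0] \<le> B" if "f \<in> L (Node [s1, s2]) a" for f
    using mem_fork2[OF that] van1 by (metis empty_iff not_le)
  have le2: "f [1] \<le> B" if "f \<in> L (Node [s1, s2]) a" for f
    using mem_fork2[OF that] van2 by (metis empty_iff not_le)
  have jS: "?j f \<in> ?S1 \<times> ?S2" if "f \<in> L (Node [s1, s2]) a" for f
    using mem_fork2[OF that] le1[OF that] le2[OF that] by auto
  have ij: "?i (?j f) = f" if "f \<in> L (Node [s1, s2]) a" for f
    using inv_fork1[OF that] by simp
  have sub: "L (Node [s1, s2]) a \<subseteq> ?i ` (?S1 \<times> ?S2)"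
  proof
    fix f assume f: "f \<in> L (Node [s1, s2]) a"
    show "f \<in> ?i ` (?S1 \<times> ?S2)" using jS[OF f] ij[OF f] by (metis image_eqI)
  qed
  have finS: "finite (?S1 \<times> ?S2)" using fin1 fin2 by auto
  show "finite (L (Node [s1, s2]) a)" using finite_subset[OF sub] finS by blast
  show "B < a \<Longrightarrow> L (Node [s1, s2]) a = {}" using le1 mem_fork2 by fastforce
  have "GL (Node [s1, s2]) a = (\<Sum>((v1, g1), (v2, g2))\<in>?S1 \<times> ?S2. monom 1 (v1 + wt s1 g1) * monom 1 (v2 + wt s2 g2))"
    unfolding GL_def
  proof (rule sum.reindex_bij_witness[where i = ?i and j = ?j])
    fix f assume f: "f \<in> L (Node [s1, s2]) a"
    show "?i (?j f) = f" by (rule ij[OF f])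
  next
    fix f assume f: "f \<in> L (Node [s1, s2]) a"
    show "?j f \<in> ?S1 \<times> ?S2" by (rule jS[OF f])
  next
    fix x assume x: "x \<in> ?S1 \<times> ?S2"
    obtain v1 g1 v2 g2 where [simp]: "x = ((v1, g1), (v2, g2))" by (metis prod.exhaust)
    show "?j (?i x) = x" using inv_fork2[of g1 s1 v1 g2 s2 v2] x by auto
  next
    fix x assume x: "x \<in> ?S1 \<times> ?S2"
    obtain v1 g1 v2 g2 where [simp]: "x = ((v1, g1), (v2, g2))" by (metis prod.exhaust)
    show "?i x \<in> L (Node [s1, s2]) a" using mem_fork x by auto
  next
    fix f assume f: "f \<in> L (Node [s1, s2]) a"
    have "wt (Node [s1, s2]) f = wt (Node [s1, s2]) (?i (?j f))" using ij[OF f] by simp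
    also have "\<dots> = (f [0] + wt s1 (res 0 f)) + (f [1] + wt s2 (res 1 f))" by (simp add: wt_fork)
    finally show "(\<lambda>((v1, g1), (v2, g2)). monom 1 (v1 + wt s1 g1) * monom (1::int) (v2 + wt s2 g2)) (?j f) = monom 1 (wt (Node [s1, s2]) f)"
      by (simp add: mult_monom)
  qed
  also have "\<dots> = (\<Sum>(v1, g1)\<in>?S1. \<Sum>(v2, g2)\<in>?S2. monom 1 (v1 + wt s1 g1) * monom 1 (v2 + wt s2 g2))"
    by (simp add: sum.cartesian_product split_def)
  also have "\<dots> = (\<Sum>(v1, g1)\<in>?S1. monom 1 (v1 + wt s1 g1)) * (\<Sum>(v2, g2)\<in>?S2. monom 1 (v2 + wt s2 g2))"
    by (simp add: sum_product case_prod_beta)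
  also have "\<dots> = (\<Sum>v\<in>{a..B}. monom 1 v * GL s1 v) * (\<Sum>v\<in>{a..B}. monom 1 v * GL s2 v)"
    using sigma_sum[OF fin1] sigma_sum[OF fin2] by simp
  finally show "GL (Node [s1, s2]) a = (\<Sum>v\<in>{a..B}. monom 1 v * GL s1 v) * (\<Sum>v\<in>{a..B}. monom 1 v * GL s2 v)" .
qed




lemma qb_0 [simp]: "qb N 0 = 1"
  by (cases N) auto

lemma G_GL: "G t = GL t 0"
proof -
  have "leafok t 0" by (cases t) auto
  then have "L t 0 = LS_labellings t" by (auto simp: L_def)
  then show ?thesis by (simp add: G_def GL_def wt_def)
qed

lemma chain_add: "chain (a + b) t = chain a (chain b t)"
  by (induction a) auto

lemma LS_Leaf: "LS_labellings (Leaf c) = {\<lambda>_. 0}"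
  by (auto simp: LS_labellings_def)

lemma L_Leaf: "L (Leaf c) v = (if v \<le> c then {\<lambda>_. 0} else {})"
  by (auto simp: L_def LS_Leaf)

lemma GL_Leaf: "GL (Leaf c) v = (if v \<le> c then 1 else 0)"
  by (simp add: GL_def L_Leaf wt_def)

lemma chain_props: "finite (L (chain k (Leaf c)) v) \<and> (c < v \<longrightarrow> L (chain k (Leaf c)) v = {})"
proof (induction k arbitrary: v)
  case 0 then show ?case by (simp add: L_Leaf)
next
  case (Suc k)
  have f: "\<And>v. finite (L (chain k (Leaf c)) v)" and z: "\<And>v. c < v \<Longrightarrow> L (chain k (Leaf c)) v = {}"
    using Suc by auto
  show ?case using single(2,3)[OF f z] by simp
qed

lemma chain_fin: "finite (L (chain k (Leaf c)) v)" using chain_props by blast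
lemma chain_van: "c \<le> B \<Longrightarrow> B < v \<Longrightarrow> L (chain k (Leaf c)) v = {}" using chain_props by (meson le_less_trans)

lemma chain_rec: "c \<le> B \<Longrightarrow> GL (chain (Suc k) (Leaf c)) a = (\<Sum>v\<in>{a..B}. monom 1 v * GL (chain k (Leaf c)) v)"
  using single(1)[OF chain_fin chain_van, of B] by simp

lemma sum_step:
  "a \<le> c \<Longrightarrow> (\<Sum>v\<in>{a..c}. monom 1 (Suc k * v) * qb (k + (c - v)) k) = monom 1 (Suc k * a) * qb (Suc k + (c - a)) (Suc k)"
proof (induction "c - a" arbitrary: a)
  case 0
  then have "a = c" by simp
  then show ?case by (simp add: qb_diag)
next
  case (Suc d)
  then have ac: "a < c" and d: "c - Suc a = d" by auto
  have split: "{a..c} = insert a {Suc a..c}" using ac by auto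
  have IH: "(\<Sum>v\<in>{Suc a..c}. monom 1 (Suc k * v) * qb (k + (c - v)) k) = monom 1 (Suc k * Suc a) * qb (Suc k + (c - Suc a)) (Suc k)"
    using Suc.hyps(1)[of "Suc a"] d ac by simp
  have N: "k + (c - a) = Suc (k + (c - Suc a))" "Suc k + (c - Suc a) = k + (c - a)" using ac by auto
  have "(\<Sum>v\<in>{a..c}. monom 1 (Suc k * v) * qb (k + (c - v)) k)
      = monom 1 (Suc k * a) * qb (k + (c - a)) k + monom 1 (Suc k * Suc a) * qb (Suc k + (c - Suc a)) (Suc k)"
    unfolding split using IH by simp
  also have "\<dots> = monom 1 (Suc k * a) * (qb (k + (c - a)) k + monom 1 (Suc k) * qb (k + (c - a)) (Suc k))"
    unfolding N(2) by (simp add: mult_monom algebra_simps)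
  also have "\<dots> = monom 1 (Suc k * a) * qb (Suc k + (c - a)) (Suc k)"
    by simp
  finally show ?case .
qed

lemma chain_closed: "GL (chain k (Leaf c)) a = (if a \<le> c then monom 1 (k * a) * qb (k + (c - a)) k else 0)"
proof (induction k arbitrary: a)
  case 0 then show ?case by (simp add: GL_Leaf)
next
  case (Suc k)
  have "GL (chain (Suc k) (Leaf c)) a = (\<Sum>v\<in>{a..c}. monom 1 v * GL (chain k (Leaf c)) v)"
    by (rule chain_rec) simp
  also have "\<dots> = (\<Sum>v\<in>{a..c}. monom 1 (Suc k * v) * qb (k + (c - v)) k)"
    by (rule sum.cong) (auto simp: Suc mult_monom)
  finally show ?case using sum_step[of a c k] by auto
qed

lemma pointwise:
  "GL (chain n (Leaf c)) a * GL (chain m (Leaf (c + n))) a = qb (n + m) n * GL (chain (n + m) (Leaf c)) a"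
proof (cases "a \<le> c")
  case True
  define d where "d = c - a"
  have e: "c + n - a = n + d" "c - a = d" using True by (auto simp: d_def)
  have "GL (chain n (Leaf c)) a * GL (chain m (Leaf (c + n))) a
      = monom 1 ((n + m) * a) * (qb (n + d) n * qb (n + m + d) m)"
    using True by (simp add: chain_closed e mult_monom algebra_simps)
  also have "\<dots> = monom 1 ((n + m) * a) * (qb (n + m) n * qb (n + m + d) (n + m))"
    by (simp only: qb_prod)
  also have "\<dots> = qb (n + m) n * GL (chain (n + m) (Leaf c)) a"
    using True by (simp add: chain_closed e algebra_simps)
  finally show ?thesis .
qed (simp add: chain_closed)

lemma lift:
  assumes finX: "\<And>v. finite (L X v)" and vanX: "\<And>v. B < v \<Longrightarrow> L X v = {}"
    and finY: "\<And>v. finite (L Y v)" and vanY: "\<And>v. B < v \<Longrightarrow> L Y v = {}"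
    and eq: "\<And>v. GL X v = q * GL Y v"
  shows "(\<forall>v. finite (L (chain K X) v) \<and> finite (L (chain K Y) v) \<and> (B < v \<longrightarrow> L (chain K X) v = {} \<and> L (chain K Y) v = {}))
    \<and> (\<forall>v. GL (chain K X) v = q * GL (chain K Y) v)"
proof (induction K)
  case 0 then show ?case using assms by auto
next
  case (Suc K)
  have f1: "\<And>v. finite (L (chain K X) v)" and z1: "\<And>v. B < v \<Longrightarrow> L (chain K X) v = {}"
    and f2: "\<And>v. finite (L (chain K Y) v)" and z2: "\<And>v. B < v \<Longrightarrow> L (chain K Y) v = {}"
    and e: "\<And>v. GL (chain K X) v = q * GL (chain K Y) v" using Suc by auto
  show ?case using single[OF f1 z1] single[OF f2 z2]
    by (simp add: e sum_distrib_left algebra_simps)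
qed

theorem mainTheorem9:
  fixes n1 m1 M c1 :: nat
  assumes "n1 \<ge> 1" and "m1 \<ge> 1" and "M \<ge> n1 + m1"
  shows "G (chain (M - m1 - n1)
             (Node [chain (n1 - 1) (Leaf c1), chain (m1 - 1) (Leaf (c1 + n1))]))
         = qbinom (n1 + m1) n1 * G (chain M (Leaf c1))"
proof -
  define K where "K = M - m1 - n1"
  define B where "B = c1 + n1"
  define s1 where "s1 = chain (n1 - 1) (Leaf c1)"
  define s2 where "s2 = chain (m1 - 1) (Leaf (c1 + n1))"
  define Y where "Y = chain (n1 + m1) (Leaf c1)"
  have MK: "M = K + (n1 + m1)" using assms by (simp add: K_def)
  have n1: "chain n1 (Leaf c1) = Node [s1]" using assms(1) unfolding s1_def
    by (metis Suc_diff_1 chain.simps(2) less_le_trans zero_less_one)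
  have m1: "chain m1 (Leaf (c1 + n1)) = Node [s2]" using assms(2) unfolding s2_def
    by (metis Suc_diff_1 chain.simps(2) less_le_trans zero_less_one)
  have f1: "\<And>v. finite (L s1 v)" unfolding s1_def by (rule chain_fin)
  have z1: "\<And>v. B < v \<Longrightarrow> L s1 v = {}" unfolding s1_def B_def by (rule chain_van) auto
  have f2: "\<And>v. finite (L s2 v)" unfolding s2_def by (rule chain_fin)
  have z2: "\<And>v. B < v \<Longrightarrow> L s2 v = {}" unfolding s2_def B_def by (rule chain_van) auto
  have fX: "\<And>v. finite (L (Node [s1, s2]) v)" and zX: "\<And>v. B < v \<Longrightarrow> L (Node [s1, s2]) v = {}"
    using fork(2,3)[OF f1 z1 f2 z2] by auto
  have fY: "\<And>v. finite (L Y v)" unfolding Y_def by (rule chain_fin)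
  have zY: "\<And>v. B < v \<Longrightarrow> L Y v = {}" unfolding Y_def B_def by (rule chain_van) auto
  have eq: "GL (Node [s1, s2]) v = qb (n1 + m1) n1 * GL Y v" for v
  proof -
    have "GL (Node [s1, s2]) v = GL (Node [s1]) v * GL (Node [s2]) v"
      using fork(1)[OF f1 z1 f2 z2] single(1)[OF f1 z1] single(1)[OF f2 z2] by simp
    also have "\<dots> = GL (chain n1 (Leaf c1)) v * GL (chain m1 (Leaf (c1 + n1))) v"
      using n1 m1 by simp
    also have "\<dots> = qb (n1 + m1) n1 * GL Y v"
      unfolding Y_def by (rule pointwise)
    finally show ?thesis .
  qed
  have "GL (chain K (Node [s1, s2])) 0 = qb (n1 + m1) n1 * GL (chain K Y) 0"
    using lift[OF fX zX fY zY eq] by blast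
  moreover have "chain M (Leaf c1) = chain K Y" unfolding MK Y_def by (rule chain_add)
  moreover have "qbinom (n1 + m1) n1 = qb (n1 + m1) n1" by (simp add: qbinom_qb)
  ultimately show ?thesis unfolding G_GL K_def s1_def s2_def by simp
qed


end
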